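(* Let $\mathcal{X}\subseteq\mathbb{R}^d$ be nonempty, closed and convex, and let $f=\frac1n\sum_{i=1}^nf_i$ with each $f_i:\mathbb{R}^d\to\mathbb{R}$ convex and differentiable. Assume $x_\star\in\operatorname{arg\,min}_{x\in\mathcal{X}}f(x)$ exists and each $f_i$ has a constrained minimizer $x_{\star,i}\in\operatorname{arg\,min}_{x\in\mathcal{X}}f_i(x)$; let $f_i^\star:=f_i(x_{\star,i})$ and $D:=\max_{1\le i\le n}\|x_{\star,i}-x_\star\|$. Assume $\|\nabla f_i(x)\|\le G$ for all $i$ and all $x\in\mathcal{X}$. Let $x_0\in\mathcal{X}$ and generate $\{x_k\}$ by sampling $i_k$ uniformly from $\{1,\dots,n\}$ independently of the past, setting $g_{i_k}=\nabla f_{i_k}(x_k)$, $t_k:=\frac{f_{i_k}(x_k)-f_{i_k}^\star}{\|g_{i_k}\|}$ if $g_{i_k}\ne0$ and $t_k:=0$ if $g_{i_k}=0$, and $x_{k+1}\in\operatorname{arg\,min}_{z\in\mathcal{X}\cap\mathcal{B}(x_k,t_k)}\langle g_{i_k},z\rangle$. Then for every $\eta\in(0,1)$ and $K\ge1$, $$\frac1K\sum_{k=0}^{K-1}\mathbb{E}\big[(f(x_k)-f(x_\star))^2\big]\le\frac{G^2\|x_0-x_\star\|^2}{(1-\eta)K}+\frac{G^2D^2}{\eta(1-\eta)},$$ and for $\hat x_K:=\frac1K\sum_{k=0}^{K-1}x_k$, $\mathbb{E}[f(\hat x_K)-f(x_\star)]\le\sqrt{\frac{G^2\|x_0-x_\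star\|^2}{(1-\eta)K}+\frac{G^2D^2}{\eta(1-\eta)}}$.
   Context: $\|\cdot\|$ is the Euclidean norm, $\mathcal{B}(x,t):=\{y:\|y-x\|\le t\}$. *)

theory Defs
  imports "HOL-Analysis.Analysis"
begin

text \<open>Index sequences i_0,...,i_{K-1} with each i_k in {0..<n} (indices shifted to start at 0).\<close>
definition index_seqs :: "nat \<Rightarrow> nat \<Rightarrow> nat list set" where
  "index_seqs n K = {is. set is \<subseteq> {..<n} \<and> length is = K}"

text \<open>Expectation w.r.t. i_0,...,i_{K-1} drawn i.i.d. uniformly from {0..<n}.\<close>
definition expect_seq :: "nat \<Rightarrow> nat \<Rightarrow> (nat list \<Rightarrow> real) \<Rightarrow> real" where
  "expect_seq n K h = (\<Sum>is\<in>index_seqs n K. h is) / real n ^ K"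

definition step_size :: "('a::real_normed_vector \<Rightarrow> real) \<Rightarrow> real \<Rightarrow> 'a \<Rightarrow> 'a \<Rightarrow> real" where
  "step_size fi fistar g x = (if g = 0 then 0 else (fi x - fistar) / norm g)"

end

theory Submission
  imports Defs
begin

lemma grad_ineq:
  fixes f :: "'a::euclidean_space \<Rightarrow> real"
  assumes cv: "convex_on UNIV f" and d: "(f has_derivative (\<lambda>h. g \<bullet> h)) (at p)"
  shows "f y \<ge> f p + g \<bullet> (y - p)"
proof -
  define v where "v = y - p"
  define \<phi> where "\<phi> = (\<lambda>s::real. f (p + s *\<^sub>R v))"
  have c: "convex_on UNIV \<phi>"
    unfolding \<phi>_def
  proof (rule convex_onI)
    fix t :: real and a b :: real
    assume t: "0 < t" "t < 1"
    have "p + ((1 - t) *\<^sub>R a + t *\<^sub>R b) *\<^sub>R v = (1 - t) *\<^sub>R (p + a *\<^sub>R v) + t *\<^sub>R (p + b *\<^sub>R v)"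
      by (simp add: algebra_simps)
    then show "f (p + ((1 - t) *\<^sub>R a + t *\<^sub>R b) *\<^sub>R v) \<le> (1 - t) * f (p + a *\<^sub>R v) + t * f (p + b *\<^sub>R v)"
      using convex_onD[OF cv, of t "p + a *\<^sub>R v" "p + b *\<^sub>R v"] t by simp
  qed simp
  have "((\<lambda>s. p + s *\<^sub>R v) has_derivative (\<lambda>s. s *\<^sub>R v)) (at 0)"
    by (auto intro!: derivative_eq_intros)
  then have "(\<phi> has_derivative (\<lambda>s. g \<bullet> (s *\<^sub>R v))) (at 0)"
    unfolding \<phi>_def using has_derivative_compose[of "\<lambda>s. p + s *\<^sub>R v" _ 0 UNIV f] d
    by (metis (no_types) add.right_neutral scale_zero_left)
  then have "(\<phi> has_field_derivative (g \<bullet> v)) (at 0)"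
  proof -
    have "(\<lambda>s. g \<bullet> (s *\<^sub>R v)) = (*) (g \<bullet> v)" by (auto simp: fun_eq_iff)
    then show ?thesis using \<open>(\<phi> has_derivative (\<lambda>s. g \<bullet> (s *\<^sub>R v))) (at 0)\<close>
      by (simp add: has_field_derivative_def)
  qed
  then have "\<phi> 1 - \<phi> 0 \<ge> (g \<bullet> v) * (1 - 0)"
    by (intro convex_on_imp_above_tangent[OF c]) auto
  then show ?thesis by (simp add: \<phi>_def v_def)
qed

lemma local_min:
  fixes X :: "'a::euclidean_space set"
  assumes cvx: "convex X" and x1: "x1 \<in> X" and y: "y \<in> X" and s: "0 < s" "s \<le> 1"
    and w: "x1 + s *\<^sub>R (y - x1) \<in> cball p t"
    and mn: "\<forall>z\<in>X \<inter> cball p t. g \<bullet> x1 \<le> g \<bullet> z"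
  shows "g \<bullet> (y - x1) \<ge> 0"
proof -
  have "x1 + s *\<^sub>R (y - x1) = (1 - s) *\<^sub>R x1 + s *\<^sub>R y" by (simp add: algebra_simps)
  also have "\<dots> \<in> X" using cvx x1 y s by (simp add: convex_alt)
  finally have "g \<bullet> x1 \<le> g \<bullet> (x1 + s *\<^sub>R (y - x1))" using mn w by blast
  then have "0 \<le> s * (g \<bullet> (y - x1))" by (simp add: inner_add_right inner_diff_right algebra_simps)
  then show ?thesis using s by (simp add: zero_le_mult_iff)
qed

lemma step_norm:
  fixes X :: "'a::euclidean_space set"
  assumes cvx: "convex X" and x1X: "x1 \<in> X" and x1b: "x1 \<in> cball p t" and xi: "xi \<in> X"
    and mn: "\<forall>z\<in>X \<inter> cball p t. g \<bullet> x1 \<le> g \<bullet> z"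
    and tan: "g \<bullet> (xi - p) \<le> - t * norm g" and g: "g \<noteq> 0"
  shows "norm (x1 - p) \<ge> t"
proof (rule ccontr)
  assume "\<not> ?thesis"
  then have lt: "norm (x1 - p) < t" by simp
  define v where "v = xi - x1"
  have "g \<bullet> v \<ge> 0"
  proof (cases "v = 0")
    case True then show ?thesis by simp
  next
    case False
    then have nv: "norm v > 0" by simp
    define s where "s = min 1 ((t - norm (x1 - p)) / norm v)"
    have s0: "0 < s" "s \<le> 1" using lt nv by (auto simp: s_def)
    have "s * norm v \<le> t - norm (x1 - p)" using nv lt
      by (simp add: s_def min_def field_simps split: if_splits)
    moreover have "dist p (x1 + s *\<^sub>R v) \<le> norm (x1 - p) + s * norm v"
    proof -
      have "dist p (x1 + s *\<^sub>R v) = norm ((x1 - p) + s *\<^sub>R v)" by (simp add: dist_norm norm_minus_commute algebra_simps)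
      also have "\<dots> \<le> norm (x1 - p) + norm (s *\<^sub>R v)" by (rule norm_triangle_ineq)
      finally show ?thesis using s0 by simp
    qed
    ultimately have "x1 + s *\<^sub>R (xi - x1) \<in> cball p t" by (simp add: v_def)
    from local_min[OF cvx x1X xi s0 this mn] show ?thesis by (simp add: v_def)
  qed
  then have "g \<bullet> (x1 - p) \<le> - t * norm g" using tan by (simp add: v_def inner_diff_right)
  moreover have "- (norm g * norm (x1 - p)) \<le> g \<bullet> (x1 - p)"
    using Cauchy_Schwarz_ineq2[of g "x1 - p"] by (simp add: abs_le_iff) 
  moreover have "norm g * norm (x1 - p) < norm g * t" using g lt by simp
  ultimately show False by (simp add: mult.commute)
qed

lemma step_inner:
  fixes X :: "'a::euclidean_space set"
  assumes cvx: "convex X" and x1X: "x1 \<in> X" and x1b: "x1 \<in> cball p t" and xi: "xi \<in> X"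
    and mn: "\<forall>z\<in>X \<inter> cball p t. g \<bullet> x1 \<le> g \<bullet> z"
    and tan: "g \<bullet> (xi - p) \<le> - t * norm g" and g0: "g = 0 \<Longrightarrow> t = 0"
  shows "(x1 - p) \<bullet> (xi - x1) \<ge> 0"
proof (rule ccontr)
  assume "\<not> ?thesis"
  then have neg: "(x1 - p) \<bullet> (xi - x1) < 0" by simp
  define v where "v = xi - x1"
  define d where "d = x1 - p"
  have nd: "norm d \<le> t" using x1b by (simp add: d_def dist_norm norm_minus_commute)
  have "v \<noteq> 0" using neg by (auto simp: v_def)
  then have nv: "norm v > 0" by simp
  have dv: "d \<bullet> v < 0" using neg by (simp add: d_def v_def)
  define s where "s = min 1 (- (d \<bullet> v) / (norm v)\<^sup>2)"
  have s0: "0 < s" "s \<le> 1" using dv nv by (auto simp: s_def divide_neg_pos)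
  have "s * (norm v)\<^sup>2 \<le> - (d \<bullet> v)" using nv dv
    by (simp add: s_def min_def field_simps split: if_splits)
  then have "s * s * (norm v)\<^sup>2 \<le> s * (- (d \<bullet> v))" using s0
    by (metis mult.assoc mult_left_mono order_less_imp_le)
  have "(norm (d + s *\<^sub>R v))\<^sup>2 = (norm d)\<^sup>2 + 2 * s * (d \<bullet> v) + s * s * (norm v)\<^sup>2"
    by (simp add: power2_norm_eq_inner inner_add_left inner_add_right inner_commute algebra_simps)
  also have "\<dots> \<le> (norm d)\<^sup>2 + s * (d \<bullet> v)" using \<open>s * s * (norm v)\<^sup>2 \<le> s * (- (d \<bullet> v))\<close> by simp
  also have "\<dots> \<le> (norm d)\<^sup>2" using s0 dv by (simp add: mult_nonneg_nonpos)
  also have "\<dots> \<le> t\<^sup>2" using nd by (simp add: power_mono)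
  finally have "norm (d + s *\<^sub>R v) \<le> t" using nd
    by (meson norm_ge_zero order_trans power2_le_imp_le)
  then have "x1 + s *\<^sub>R (xi - x1) \<in> cball p t"
    by (simp add: d_def v_def dist_norm norm_minus_commute algebra_simps)
  from local_min[OF cvx x1X xi s0 this mn] have gv: "g \<bullet> v \<ge> 0" by (simp add: v_def)
  have gd: "- (norm g * norm d) \<le> g \<bullet> d"
    using Cauchy_Schwarz_ineq2[of g d] by (simp add: abs_le_iff)
  have gvd: "g \<bullet> v = g \<bullet> (xi - p) - g \<bullet> d" by (simp add: v_def d_def inner_diff_right)
  have "norm g * norm d \<le> norm g * t" using nd by (simp add: mult_left_mono)
  then have gv0: "g \<bullet> v = 0" and gdt: "g \<bullet> d = - t * norm g"
    using gv gvd tan gd by (auto simp: mult.commute)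
  show False
  proof (cases "g = 0")
    case True
    then have "t = 0" by (rule g0)
    then have "d = 0" using nd by simp
    then show False using dv by simp
  next
    case False
    then have ng: "norm g > 0" by simp
    define u where "u = d + (t / norm g) *\<^sub>R g"
    have "u \<bullet> u = d \<bullet> d + 2 * (t / norm g) * (g \<bullet> d) + (t / norm g) * (t / norm g) * (g \<bullet> g)"
      by (simp add: u_def inner_add_left inner_add_right inner_commute algebra_simps)
    then have "(norm u)\<^sup>2 = (norm d)\<^sup>2 + 2 * (t / norm g) * (g \<bullet> d) + (t / norm g) * (t / norm g) * (norm g)\<^sup>2"
      by (simp only: power2_norm_eq_inner)
    also have "\<dots> = (norm d)\<^sup>2 - t\<^sup>2" using ng by (simp add: gdt field_simps power2_eq_square)
    also have "\<dots> \<le> 0" using nd by (simp add: power_mono)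
    finally have "u = 0" by simp
    then have "d = - (t / norm g) *\<^sub>R g" by (simp add: u_def eq_neg_iff_add_eq_0)
    then have "d \<bullet> v = 0" using gv0 by simp
    then show False using dv by simp
  qed
qed

lemma avg_sq:
  fixes y :: "'b \<Rightarrow> real"
  assumes "finite A" "card A > 0"
  shows "((\<Sum>a\<in>A. y a) / card A)\<^sup>2 \<le> (\<Sum>a\<in>A. (y a)\<^sup>2) / card A"
proof -
  define c where "c = real (card A)"
  define m where "m = (\<Sum>a\<in>A. y a) / c"
  have c0: "c > 0" using assms by (simp add: c_def)
  have "0 \<le> (\<Sum>a\<in>A. (y a - m)\<^sup>2)" by (simp add: sum_nonneg)
  also have "\<dots> = (\<Sum>a\<in>A. (y a)\<^sup>2 - (2 * m) * y a + m\<^sup>2)"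
    by (simp add: power2_diff algebra_simps)
  also have "\<dots> = (\<Sum>a\<in>A. (y a)\<^sup>2) - 2 * m * (\<Sum>a\<in>A. y a) + c * m\<^sup>2"
    by (simp add: sum.distrib sum_subtractf sum_distrib_left[symmetric] c_def)
  also have "\<dots> = (\<Sum>a\<in>A. (y a)\<^sup>2) - c * m\<^sup>2"
    using c0 by (simp add: m_def power2_eq_square field_simps)
  finally have "c * m\<^sup>2 \<le> (\<Sum>a\<in>A. (y a)\<^sup>2)" by simp
  then show ?thesis using c0 by (simp add: m_def c_def[symmetric] field_simps power2_eq_square)
qed

lemma index_seqs_Suc:
  "index_seqs n (Suc m) = (\<lambda>(is, i). is @ [i]) ` (index_seqs n m \<times> {..<n})"
proof (rule set_eqI, rule iffI)
  fix xs assume "xs \<in> index_seqs n (Suc m)"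
  then have "set xs \<subseteq> {..<n}" "length xs = Suc m" by (auto simp: index_seqs_def)
  then obtain ys i where "xs = ys @ [i]" by (metis length_Suc_conv_rev)
  then show "xs \<in> (\<lambda>(is, i). is @ [i]) ` (index_seqs n m \<times> {..<n})"
    using \<open>set xs \<subseteq> {..<n}\<close> \<open>length xs = Suc m\<close>
    by (auto simp: index_seqs_def image_iff intro!: bexI[of _ "(ys, i)"])
qed (auto simp: index_seqs_def)

lemma finite_index_seqs: "finite (index_seqs n m)"
  by (induction m) (auto simp: index_seqs_Suc, simp add: index_seqs_def)

lemma expect_Suc:
  "expect_seq n (Suc m) h = expect_seq n m (\<lambda>is. (\<Sum>i<n. h (is @ [i])) / real n)"
proof -
  have inj: "inj_on (\<lambda>(is, i). is @ [i]) (index_seqs n m \<times> {..<n})"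
    by (auto simp: inj_on_def)
  have "(\<Sum>is\<in>index_seqs n (Suc m). h is) = (\<Sum>p\<in>index_seqs n m \<times> {..<n}. h (fst p @ [snd p]))"
    unfolding index_seqs_Suc by (subst sum.reindex[OF inj]) (simp add: case_prod_beta)
  also have "\<dots> = (\<Sum>is\<in>index_seqs n m. \<Sum>i<n. h (is @ [i]))"
    unfolding sum.cartesian_product by (simp add: case_prod_beta)
  finally show ?thesis
    by (simp add: expect_seq_def sum_divide_distrib[symmetric] field_simps)
qed

lemma expect_cong:
  "(\<And>is. is \<in> index_seqs n K \<Longrightarrow> h is = h' is) \<Longrightarrow> expect_seq n K h = expect_seq n K h'"
  unfolding expect_seq_def by (simp cong: sum.cong)

lemma expect_mono:
  "(\<And>is. is \<in> index_seqs n K \<Longrightarrow> h is \<le> h' is) \<Longrightarrow> expect_seq n K h \<le> expect_seq n K h'"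
  unfolding expect_seq_def by (intro divide_right_mono sum_mono) auto

lemma expect_add: "expect_seq n K (\<lambda>is. h is + h' is) = expect_seq n K h + expect_seq n K h'"
  unfolding expect_seq_def by (simp add: sum.distrib add_divide_distrib)

lemma expect_diff: "expect_seq n K (\<lambda>is. h is - h' is) = expect_seq n K h - expect_seq n K h'"
  unfolding expect_seq_def by (simp add: sum_subtractf diff_divide_distrib)

lemma expect_cmult: "expect_seq n K (\<lambda>is. c * h is) = c * expect_seq n K h"
  unfolding expect_seq_def by (simp add: sum_distrib_left[symmetric])

lemma expect_sum: "expect_seq n K (\<lambda>is. \<Sum>k\<in>A. h k is) = (\<Sum>k\<in>A. expect_seq n K (h k))"
  unfolding expect_seq_def by (simp add: sum.swap[of _ A] sum_divide_distrib)

lemma expect_const: "n > 0 \<Longrightarrow> expect_seq n K (\<lambda>_. c) = c"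
proof (induction K)
  case 0
  have "index_seqs n 0 = {[]}" by (auto simp: index_seqs_def)
  then show ?case by (simp add: expect_seq_def)
next
  case (Suc K)
  then show ?case by (simp add: expect_Suc)
qed

lemma card_index_seqs: "n > 0 \<Longrightarrow> real (card (index_seqs n K)) = real n ^ K"
  using expect_const[of n K 1] by (simp add: expect_seq_def)

lemma expect_take:
  assumes "k \<le> K" and n0: "n > 0"
  shows "expect_seq n K (\<lambda>is. h (take k is)) = expect_seq n k h"
  using assms
proof (induction K)
  case 0
  then have k0: "k = 0" by simp
  show ?case unfolding k0 by (intro expect_cong) (auto simp: index_seqs_def)
next
  case (Suc K)
  show ?case
  proof (cases "k = Suc K")
    case True
    show ?thesis unfolding True by (intro expect_cong) (auto simp: index_seqs_def)
  next
    case False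
    then have kK: "k \<le> K" using Suc.prems by simp
    have "expect_seq n (Suc K) (\<lambda>is. h (take k is))
        = expect_seq n K (\<lambda>is. (\<Sum>i<n. h (take k (is @ [i]))) / real n)" by (rule expect_Suc)
    also have "\<dots> = expect_seq n K (\<lambda>is. (\<Sum>i<n. h (take k is)) / real n)"
      by (intro expect_cong) (use kK in \<open>auto simp: index_seqs_def\<close>)
    also have "\<dots> = expect_seq n K (\<lambda>is. h (take k is))"
      using n0 by (intro expect_cong) simp
    also have "\<dots> = expect_seq n k h" using Suc.IH kK n0 by simp
    finally show ?thesis .
  qed
qed

lemma expect_sq:
  assumes "n > 0"
  shows "(expect_seq n K Y)\<^sup>2 \<le> expect_seq n K (\<lambda>is. (Y is)\<^sup>2)"
proof -
  have c: "card (index_seqs n K) > 0" using card_index_seqs[OF assms, of K] assms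
    by (metis of_nat_0_less_iff zero_less_power)
  from avg_sq[OF finite_index_seqs c, of Y] show ?thesis
    unfolding expect_seq_def using card_index_seqs[OF assms, of K] by simp
qed

lemma one_step:
  fixes X :: "'a::euclidean_space set" and fi :: "'a \<Rightarrow> real"
  assumes cvx: "convex X" and pX: "p \<in> X" and xiX: "xi \<in> X"
    and cf: "convex_on UNIV fi" and der: "(fi has_derivative (\<lambda>h. g \<bullet> h)) (at p)"
    and ximin: "\<And>y. y \<in> X \<Longrightarrow> fi xi \<le> fi y"
    and gG: "norm g \<le> G"
    and x1: "x1 \<in> X \<inter> cball p (step_size fi (fi xi) g p)"
    and mn: "\<forall>z\<in>X \<inter> cball p (step_size fi (fi xi) g p). g \<bullet> x1 \<le> g \<bullet> z"
    and eta: "0 < \<eta>" "\<eta> < 1" and Dz: "norm (xi - z) \<le> D"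
  shows "G\<^sup>2 * (norm (x1 - z))\<^sup>2 \<le> G\<^sup>2 * (norm (p - z))\<^sup>2 - (1 - \<eta>) * (fi p - fi xi)\<^sup>2 + G\<^sup>2 * D\<^sup>2 / \<eta>"
proof -
  define t where "t = step_size fi (fi xi) g p"
  define d where "d = x1 - p"
  have G0: "G \<ge> 0" using gG norm_ge_zero order_trans by blast
  have gi: "fi xi \<ge> fi p + g \<bullet> (xi - p)" by (rule grad_ineq[OF cf der])
  have gap0: "fi p - fi xi \<ge> 0" using ximin[OF pX] by simp
  have tan: "g \<bullet> (xi - p) \<le> - t * norm g"
    using gi by (cases "g = 0") (auto simp: t_def step_size_def)
  have g0: "g = 0 \<Longrightarrow> t = 0" by (simp add: t_def step_size_def)
  have x1X: "x1 \<in> X" and x1b: "x1 \<in> cball p t" using x1 by (auto simp: t_def)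
  have mn': "\<forall>z\<in>X \<inter> cball p t. g \<bullet> x1 \<le> g \<bullet> z" using mn by (simp add: t_def)
  have nd: "norm d \<le> t" using x1b by (simp add: d_def dist_norm norm_minus_commute)
  have gap: "fi p - fi xi \<le> G * norm d"
  proof (cases "g = 0")
    case True
    then have "fi p - fi xi \<le> 0" using gi by simp
    then show ?thesis using G0 by (meson mult_nonneg_nonneg norm_ge_zero order_trans)
  next
    case False
    have "norm d \<ge> t" using step_norm[OF cvx x1X x1b xiX mn' tan False] by (simp add: d_def)
    have "fi p - fi xi = t * norm g" using False by (simp add: t_def step_size_def)
    also have "\<dots> \<le> norm d * norm g" using \<open>norm d \<ge> t\<close> by (simp add: mult_right_mono)
    also have "\<dots> \<le> norm d * G" using gG by (simp add: mult_left_mono)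
    finally show ?thesis by (simp add: mult.commute)
  qed
  have sq: "(fi p - fi xi)\<^sup>2 \<le> G\<^sup>2 * (norm d)\<^sup>2"
    using power_mono[OF gap gap0, of 2] by (simp add: power_mult_distrib)
  have inn: "d \<bullet> (xi - x1) \<ge> 0" using step_inner[OF cvx x1X x1b xiX mn' tan g0] by (simp add: d_def)
  have xz: "x1 - z = (p - z) + d" by (simp add: d_def)
  have "(norm ((p - z) + d))\<^sup>2 = (norm (p - z))\<^sup>2 + 2 * (d \<bullet> (p - z)) + (norm d)\<^sup>2"
    by (simp add: power2_norm_eq_inner inner_add_left inner_add_right inner_commute)
  then have e1: "(norm (x1 - z))\<^sup>2 = (norm (p - z))\<^sup>2 + 2 * (d \<bullet> (p - z)) + (norm d)\<^sup>2"
    by (simp only: xz)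
  have "d \<bullet> (p - z) = d \<bullet> (x1 - z) - d \<bullet> d" by (simp add: d_def inner_diff_right inner_diff_left inner_commute)
  also have "\<dots> = d \<bullet> (x1 - xi) + d \<bullet> (xi - z) - (norm d)\<^sup>2"
    by (simp add: inner_diff_right power2_norm_eq_inner)
  finally have e2: "d \<bullet> (p - z) = d \<bullet> (x1 - xi) + d \<bullet> (xi - z) - (norm d)\<^sup>2" .
  have "d \<bullet> (x1 - xi) \<le> 0" using inn by (simp add: inner_diff_right)
  moreover have "d \<bullet> (xi - z) \<le> norm d * D"
    using norm_cauchy_schwarz[of d "xi - z"] Dz by (meson mult_left_mono norm_ge_zero order_trans)
  ultimately have "(norm (x1 - z))\<^sup>2 \<le> (norm (p - z))\<^sup>2 - (norm d)\<^sup>2 + 2 * (norm d * D)"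
    using e1 e2 by simp
  moreover have "2 * (norm d * D) \<le> \<eta> * (norm d)\<^sup>2 + D\<^sup>2 / \<eta>"
  proof -
    have "0 \<le> (\<eta> * norm d - D)\<^sup>2" by simp
    then have "2 * \<eta> * (norm d * D) \<le> \<eta> * (\<eta> * (norm d)\<^sup>2) + D\<^sup>2"
      by (simp add: power2_diff power_mult_distrib algebra_simps power2_eq_square)
    then have "\<eta> * (2 * (norm d * D)) \<le> \<eta> * (\<eta> * (norm d)\<^sup>2 + D\<^sup>2 / \<eta>)"
      using eta by (simp add: algebra_simps)
    then show ?thesis using eta by simp
  qed
  ultimately have "(norm (x1 - z))\<^sup>2 \<le> (norm (p - z))\<^sup>2 - (1 - \<eta>) * (norm d)\<^sup>2 + D\<^sup>2 / \<eta>"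
    by (simp add: algebra_simps)
  then have "G\<^sup>2 * (norm (x1 - z))\<^sup>2 \<le> G\<^sup>2 * ((norm (p - z))\<^sup>2 - (1 - \<eta>) * (norm d)\<^sup>2 + D\<^sup>2 / \<eta>)"
    by (simp add: mult_left_mono)
  also have "\<dots> = G\<^sup>2 * (norm (p - z))\<^sup>2 - (1 - \<eta>) * (G\<^sup>2 * (norm d)\<^sup>2) + G\<^sup>2 * D\<^sup>2 / \<eta>"
    by (simp add: algebra_simps)
  also have "\<dots> \<le> G\<^sup>2 * (norm (p - z))\<^sup>2 - (1 - \<eta>) * (fi p - fi xi)\<^sup>2 + G\<^sup>2 * D\<^sup>2 / \<eta>"
    using sq eta by (simp add: mult_left_mono)
  finally show ?thesis .
qed

theorem theorem11:
  fixes X :: "'a::euclidean_space set"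
    and n :: nat
    and fs :: "nat \<Rightarrow> 'a \<Rightarrow> real"
    and gf :: "nat \<Rightarrow> 'a \<Rightarrow> 'a"
    and xstar x0 :: 'a
    and xs :: "nat \<Rightarrow> 'a"
    and G :: real
    and x :: "nat list \<Rightarrow> 'a"
  defines "f \<equiv> (\<lambda>y. (\<Sum>i<n. fs i y) / real n)"
      and "fstar \<equiv> (\<lambda>i. fs i (xs i))"
      and "D \<equiv> Max ((\<lambda>i. norm (xs i - xstar)) ` {..<n})"
  assumes "X \<noteq> {}" and "closed X" and "convex X"
      and "n \<ge> 1"
      and "\<And>i. i < n \<Longrightarrow> convex_on UNIV (fs i)"
      and "\<And>i y. i < n \<Longrightarrow> (fs i has_derivative (\<lambda>h. gf i y \<bullet> h)) (at y)"
      and "xstar \<in> X" and "\<And>y. y \<in> X \<Longrightarrow> f xstar \<le> f y"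
      and "\<And>i. i < n \<Longrightarrow> xs i \<in> X"
      and "\<And>i y. i < n \<Longrightarrow> y \<in> X \<Longrightarrow> fs i (xs i) \<le> fs i y"
      and "\<And>i y. i < n \<Longrightarrow> y \<in> X \<Longrightarrow> norm (gf i y) \<le> G"
      and "x0 \<in> X"
      and "x [] = x0"
      and "\<And>is i. set is \<subseteq> {..<n} \<Longrightarrow> i < n \<Longrightarrow>
             x (is @ [i]) \<in> X \<inter> cball (x is) (step_size (fs i) (fstar i) (gf i (x is)) (x is)) \<and>
             (\<forall>z \<in> X \<inter> cball (x is) (step_size (fs i) (fstar i) (gf i (x is)) (x is)).
                 gf i (x is) \<bullet> x (is @ [i]) \<le> gf i (x is) \<bullet> z)"
  shows "\<forall>\<eta> K. 0 < \<eta> \<and> \<eta> < 1 \<and> K \<ge> 1 \<longrightarrow>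
           (let B = G\<^sup>2 * (norm (x0 - xstar))\<^sup>2 / ((1 - \<eta>) * real K) + G\<^sup>2 * D\<^sup>2 / (\<eta> * (1 - \<eta>)) in
             (\<Sum>k<K. expect_seq n K (\<lambda>is. (f (x (take k is)) - f xstar)\<^sup>2)) / real K \<le> B
           \<and> expect_seq n K (\<lambda>is. f ((\<Sum>k<K. x (take k is)) /\<^sub>R real K) - f xstar) \<le> sqrt B)"
proof (intro allI impI)
  fix \<eta> :: real and K :: nat
  assume hyp: "0 < \<eta> \<and> \<eta> < 1 \<and> K \<ge> 1"
  then have eta: "0 < \<eta>" "\<eta> < 1" and K1: "K \<ge> 1" by auto
  define B where "B = G\<^sup>2 * (norm (x0 - xstar))\<^sup>2 / ((1 - \<eta>) * real K) + G\<^sup>2 * D\<^sup>2 / (\<eta> * (1 - \<eta>))"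
  have n0: "n > 0" using assms(7) by simp
  have G0: "G \<ge> 0" using assms(14)[OF n0 assms(15)] norm_ge_zero order_trans by blast
  have xX: "set is \<subseteq> {..<n} \<Longrightarrow> x is \<in> X" for "is"
  proof (induction "is" rule: rev_induct)
    case Nil then show ?case using assms(15,16) by simp
  next
    case (snoc i "is") then show ?case using assms(17)[of "is" i] by auto
  qed
  have fstar_le: "fstar i \<le> fs i xstar" if "i < n" for i
    using assms(13)[OF that assms(10)] by (simp add: fstar_def)
  have Dge: "norm (xs i - xstar) \<le> D" if "i < n" for i
    unfolding D_def using that by (intro Max_ge) auto
  have step1: "G\<^sup>2 * (norm (x (is @ [i]) - xstar))\<^sup>2 \<le> G\<^sup>2 * (norm (x is - xstar))\<^sup>2
      - (1 - \<eta>) * (fs i (x is) - fstar i)\<^sup>2 + G\<^sup>2 * D\<^sup>2 / \<eta>"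
    if "set is \<subseteq> {..<n}" "i < n" for "is" i
    unfolding fstar_def
    using one_step[OF assms(6) xX[OF that(1)] assms(12)[OF that(2)] assms(8)[OF that(2)]
        assms(9)[OF that(2)] assms(13)[OF that(2)] assms(14)[OF that(2) xX[OF that(1)]]
        conjunct1[OF assms(17)[OF that], unfolded fstar_def] conjunct2[OF assms(17)[OF that], unfolded fstar_def] eta Dge[OF that(2)]]
    by (simp add: fstar_def)
  have step2: "G\<^sup>2 * ((\<Sum>i<n. (norm (x (is @ [i]) - xstar))\<^sup>2) / real n) \<le> G\<^sup>2 * (norm (x is - xstar))\<^sup>2
      - (1 - \<eta>) * (f (x is) - f xstar)\<^sup>2 + G\<^sup>2 * D\<^sup>2 / \<eta>"
    if "set is \<subseteq> {..<n}" for "is"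
  proof -
    define p where "p = x is"
    have pX: "p \<in> X" using xX[OF that] by (simp add: p_def)
    have "0 \<le> f p - f xstar" using assms(11)[OF pX] by simp
    moreover have "f p - f xstar \<le> (\<Sum>i<n. fs i p - fstar i) / real n"
    proof -
      have "(\<Sum>i<n. fstar i) \<le> (\<Sum>i<n. fs i xstar)" by (intro sum_mono fstar_le) simp
      then show ?thesis using n0 by (simp add: f_def sum_subtractf diff_divide_distrib divide_right_mono)
    qed
    ultimately have "(f p - f xstar)\<^sup>2 \<le> ((\<Sum>i<n. fs i p - fstar i) / real n)\<^sup>2"
      by (simp add: power_mono)
    also have "\<dots> \<le> (\<Sum>i<n. (fs i p - fstar i)\<^sup>2) / real n"
      using avg_sq[of "{..<n}" "\<lambda>i. fs i p - fstar i"] n0 by simp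
    finally have A: "(f p - f xstar)\<^sup>2 \<le> (\<Sum>i<n. (fs i p - fstar i)\<^sup>2) / real n" .
    have "(\<Sum>i<n. G\<^sup>2 * (norm (x (is @ [i]) - xstar))\<^sup>2) \<le> (\<Sum>i<n. G\<^sup>2 * (norm (p - xstar))\<^sup>2
      - (1 - \<eta>) * (fs i p - fstar i)\<^sup>2 + G\<^sup>2 * D\<^sup>2 / \<eta>)"
      by (intro sum_mono) (use step1[OF that] in \<open>simp add: p_def\<close>)
    also have "\<dots> = real n * (G\<^sup>2 * (norm (p - xstar))\<^sup>2 + G\<^sup>2 * D\<^sup>2 / \<eta>) - (1 - \<eta>) * (\<Sum>i<n. (fs i p - fstar i)\<^sup>2)"
      by (simp add: sum.distrib sum_subtractf sum_distrib_left[symmetric] algebra_simps)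
    finally have "G\<^sup>2 * ((\<Sum>i<n. (norm (x (is @ [i]) - xstar))\<^sup>2) / real n) \<le>
       G\<^sup>2 * (norm (p - xstar))\<^sup>2 + G\<^sup>2 * D\<^sup>2 / \<eta> - (1 - \<eta>) * ((\<Sum>i<n. (fs i p - fstar i)\<^sup>2) / real n)"
      using n0 by (simp add: sum_distrib_left[symmetric] field_simps)
    also have "\<dots> \<le> G\<^sup>2 * (norm (p - xstar))\<^sup>2 + G\<^sup>2 * D\<^sup>2 / \<eta> - (1 - \<eta>) * (f p - f xstar)\<^sup>2"
      using mult_left_mono[OF A, of "1 - \<eta>"] eta by simp
    finally show ?thesis by (simp add: p_def)
  qed
  define a where "a = (\<lambda>k. expect_seq n k (\<lambda>is. (f (x is) - f xstar)\<^sup>2))"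
  define r where "r = (\<lambda>k. expect_seq n k (\<lambda>is. (norm (x is - xstar))\<^sup>2))"
  have step3: "G\<^sup>2 * r (Suc k) \<le> G\<^sup>2 * r k - (1 - \<eta>) * a k + G\<^sup>2 * D\<^sup>2 / \<eta>" for k
  proof -
    have "G\<^sup>2 * r (Suc k) = expect_seq n k (\<lambda>is. G\<^sup>2 * ((\<Sum>i<n. (norm (x (is @ [i]) - xstar))\<^sup>2) / real n))"
      unfolding r_def expect_Suc expect_cmult[symmetric] by simp
    also have "\<dots> \<le> expect_seq n k (\<lambda>is. G\<^sup>2 * (norm (x is - xstar))\<^sup>2
      - (1 - \<eta>) * (f (x is) - f xstar)\<^sup>2 + G\<^sup>2 * D\<^sup>2 / \<eta>)"
      by (intro expect_mono step2) (simp add: index_seqs_def)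
    also have "\<dots> = G\<^sup>2 * r k - (1 - \<eta>) * a k + G\<^sup>2 * D\<^sup>2 / \<eta>"
      by (simp add: expect_add expect_diff expect_cmult expect_const n0 r_def a_def)
    finally show ?thesis .
  qed
  have r0: "r 0 = (norm (x0 - xstar))\<^sup>2"
  proof -
    have "index_seqs n 0 = {[]}" by (auto simp: index_seqs_def)
    then show ?thesis by (simp add: r_def expect_seq_def assms(16))
  qed
  have rnn: "r k \<ge> 0" for k
    unfolding r_def expect_seq_def by (intro divide_nonneg_nonneg sum_nonneg) auto
  have tele: "(1 - \<eta>) * (\<Sum>k<m. a k) \<le> G\<^sup>2 * r 0 - G\<^sup>2 * r m + real m * (G\<^sup>2 * D\<^sup>2 / \<eta>)" for m
  proof (induction m)
    case 0 then show ?case by simp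
  next
    case (Suc m)
    have e1: "real (Suc m) * (G\<^sup>2 * D\<^sup>2 / \<eta>) = real m * (G\<^sup>2 * D\<^sup>2 / \<eta>) + G\<^sup>2 * D\<^sup>2 / \<eta>"
      by (simp add: distrib_right add_divide_distrib)
    have e2: "(1 - \<eta>) * (\<Sum>k<Suc m. a k) = (1 - \<eta>) * (\<Sum>k<m. a k) + (1 - \<eta>) * a m"
      by (simp add: algebra_simps)
    show ?case using step3[of m] Suc.IH e1 e2 by linarith
  qed
  have sumA: "(\<Sum>k<K. expect_seq n K (\<lambda>is. (f (x (take k is)) - f xstar)\<^sup>2)) = (\<Sum>k<K. a k)"
    unfolding a_def by (intro sum.cong refl expect_take) (use n0 in auto)
  have Kpos: "real K > 0" using K1 by simp
  have "(1 - \<eta>) * (\<Sum>k<K. a k) \<le> G\<^sup>2 * (norm (x0 - xstar))\<^sup>2 + real K * (G\<^sup>2 * D\<^sup>2 / \<eta>)"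
  proof -
    have "0 \<le> G\<^sup>2 * r K" using rnn[of K] by simp
    then show ?thesis using tele[of K, unfolded r0] by linarith
  qed
  then have "(\<Sum>k<K. a k) \<le> (G\<^sup>2 * (norm (x0 - xstar))\<^sup>2 + real K * (G\<^sup>2 * D\<^sup>2 / \<eta>)) / (1 - \<eta>)"
    using eta by (simp add: pos_le_divide_eq mult.commute)
  then have "(\<Sum>k<K. a k) / real K \<le> (G\<^sup>2 * (norm (x0 - xstar))\<^sup>2 + real K * (G\<^sup>2 * D\<^sup>2 / \<eta>)) / (1 - \<eta>) / real K"
    using Kpos by (rule divide_right_mono[OF _ less_imp_le])
  also have "\<dots> = B"
  proof -
    have h: "1 - \<eta> \<noteq> 0" "\<eta> \<noteq> 0" "real K \<noteq> 0" using eta Kpos by auto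
    show ?thesis unfolding B_def by (simp add: divide_simps h) (use h in \<open>simp add: algebra_simps\<close>)
  qed
  finally have part1: "(\<Sum>k<K. a k) / real K \<le> B" .
  define Y where "Y = (\<lambda>k is. f (x (take k is)) - f xstar)"
  have "(0::nat) \<in> {..<K}" using K1 by simp
  then have Kne: "{..<K} \<noteq> {}" by blast
  have jensen: "f ((\<Sum>k<K. x (take k is)) /\<^sub>R real K) \<le> (\<Sum>k<K. f (x (take k is))) / real K" for "is"
  proof -
    have "(\<Sum>k<K. x (take k is)) /\<^sub>R real K = (\<Sum>k<K. (1 / real K) *\<^sub>R x (take k is))"
      by (simp add: scaleR_sum_right divide_inverse_commute)
    then have "fs i ((\<Sum>k<K. x (take k is)) /\<^sub>R real K) \<le> (\<Sum>k<K. (1 / real K) * fs i (x (take k is)))"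
      if "i < n" for i
      using convex_on_sum[of "{..<K}" UNIV "fs i" "\<lambda>_. 1 / real K" "\<lambda>k. x (take k is)"] assms(8)[OF that] K1 Kpos Kne
      by simp
    then have "(\<Sum>i<n. fs i ((\<Sum>k<K. x (take k is)) /\<^sub>R real K)) \<le> (\<Sum>i<n. \<Sum>k<K. (1 / real K) * fs i (x (take k is)))"
      by (intro sum_mono) auto
    also have "\<dots> = (\<Sum>k<K. \<Sum>i<n. fs i (x (take k is))) / real K"
      by (subst sum.swap) (simp add: sum_distrib_left[symmetric] sum_divide_distrib)
    finally show ?thesis using n0 unfolding f_def
      by (simp add: divide_right_mono sum_divide_distrib[symmetric] field_simps)
  qed
  define m where "m = expect_seq n K (\<lambda>is. (\<Sum>k<K. Y k is) / real K)"
  have E1: "expect_seq n K (\<lambda>is. f ((\<Sum>k<K. x (take k is)) /\<^sub>R real K) - f xstar) \<le> m"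
    unfolding m_def
  proof (intro expect_mono)
    fix "is"
    have "(\<Sum>k<K. Y k is) / real K = (\<Sum>k<K. f (x (take k is))) / real K - f xstar"
      using Kpos by (simp add: Y_def sum_subtractf field_simps)
    then show "f ((\<Sum>k<K. x (take k is)) /\<^sub>R real K) - f xstar \<le> (\<Sum>k<K. Y k is) / real K"
      using jensen[of "is"] by simp
  qed
  have "m\<^sup>2 \<le> expect_seq n K (\<lambda>is. ((\<Sum>k<K. Y k is) / real K)\<^sup>2)"
    unfolding m_def by (rule expect_sq[OF n0])
  also have "\<dots> \<le> expect_seq n K (\<lambda>is. (\<Sum>k<K. (Y k is)\<^sup>2) / real K)"
    by (intro expect_mono) (use avg_sq[of "{..<K}"] Kpos in auto)
  also have "\<dots> = (\<Sum>k<K. expect_seq n K (\<lambda>is. (Y k is)\<^sup>2)) / real K"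
    by (simp add: sum_divide_distrib expect_sum expect_cmult divide_inverse_commute)
  also have "\<dots> = (\<Sum>k<K. a k) / real K" using sumA by (simp add: Y_def)
  also have "\<dots> \<le> B" by (rule part1)
  finally have "m \<le> sqrt B" by (rule real_le_rsqrt)
  with E1 have part2: "expect_seq n K (\<lambda>is. f ((\<Sum>k<K. x (take k is)) /\<^sub>R real K) - f xstar) \<le> sqrt B"
    by linarith
  show "let B = G\<^sup>2 * (norm (x0 - xstar))\<^sup>2 / ((1 - \<eta>) * real K) + G\<^sup>2 * D\<^sup>2 / (\<eta> * (1 - \<eta>)) in
             (\<Sum>k<K. expect_seq n K (\<lambda>is. (f (x (take k is)) - f xstar)\<^sup>2)) / real K \<le> B
           \<and> expect_seq n K (\<lambda>is. f ((\<Sum>k<K. x (take k is)) /\<^sub>R real K) - f xstar) \<le> sqrt B"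
    unfolding Let_def B_def[symmetric] using part1 part2 sumA by simp
qed

end
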